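(* Assume that the support $S$ of $\mu$ is bounded with diameter $D>0$ and that for all $x\in S$ and $\varepsilon\in(0,D]$, $\mu(\mathcal{B}(x,\varepsilon))\geq\rho\varepsilon^d$ for some $\rho>0$. Let $X_1,\dots,X_N$ be i.i.d. with law $\mu$. Then for all $x\in S$ and all $i\in\{1,\dots,N\}$, \[ \mathbb{E}\left[D_{(i)}(x)\right]\leq 2\left(\frac{i}{\rho(N+1)}\right)^{1/d}. \]
   Context: $\mu$ is a probability measure on $\mathbb{R}^d$, $d\geq1$; $\mathcal{B}(x,\varepsilon)$ is the closed Euclidean ball of center $x$ and radius $\varepsilon$. For $x\in\mathbb{R}^d$, $D_{(i)}(x)=\|X_{(i)}(x)-x\|$ denotes the $i$-th smallest of the distances $\|X_1-x\|,\dots,\|X_N-x\|$ (the distance from $x$ to its $i$-th nearest neighbor among $X_1,\dots,X_N$). *)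

theory Defs
  imports "HOL-Probability.Probability"
begin

definition measure_support :: "'a::metric_space measure \<Rightarrow> 'a set" where
  "measure_support \<mu> = {x. \<forall>e>0. emeasure \<mu> (ball x e) > 0}"

definition knn_dist ::
  "(nat \<Rightarrow> 'w \<Rightarrow> 'a::real_normed_vector) \<Rightarrow> nat \<Rightarrow> 'a \<Rightarrow> nat \<Rightarrow> 'w \<Rightarrow> real" where
  "knn_dist X N x i w = sort (map (\<lambda>j. norm (X j w - x)) [1..<N+1]) ! (i - 1)"

end

theory Submission
  imports Defs
begin



lemma support_full:
  fixes \<mu> :: "'a::euclidean_space measure"
  assumes "sets \<mu> = sets borel"
  shows "(UNIV - measure_support \<mu>) \<in> null_sets \<mu>"
proof -
  define F where "F = {ball y e | y e. e > 0 \<and> emeasure \<mu> (ball y e) = 0}"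
  have sp: "space \<mu> = UNIV" using assms sets_eq_imp_space_eq by fastforce
  have eq: "UNIV - measure_support \<mu> = \<Union>F"
  proof
    show "UNIV - measure_support \<mu> \<subseteq> \<Union>F"
    proof
      fix y assume "y \<in> UNIV - measure_support \<mu>"
      then obtain e where "e > 0" "\<not> emeasure \<mu> (ball y e) > 0"
        unfolding measure_support_def by auto
      then have "ball y e \<in> F" unfolding F_def by (auto simp: zero_less_iff_neq_zero)
      then show "y \<in> \<Union>F" using \<open>e > 0\<close> centre_in_ball by blast
    qed
  next
    show "\<Union>F \<subseteq> UNIV - measure_support \<mu>"
    proof
      fix z assume "z \<in> \<Union>F"
      then obtain y e where ye: "e > 0" "emeasure \<mu> (ball y e) = 0" "z \<in> ball y e"
        unfolding F_def by auto
      define e' where "e' = e - dist y z"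
      have "e' > 0" using ye unfolding e'_def by (auto simp: dist_commute)
      have "ball z e' \<subseteq> ball y e" unfolding e'_def
        by (auto simp: ball_def) (metis dist_triangle add.commute less_diff_eq order_le_less_trans)
      then have "emeasure \<mu> (ball z e') \<le> emeasure \<mu> (ball y e)"
        by (intro emeasure_mono) (auto simp: assms)
      then have "emeasure \<mu> (ball z e') = 0" using ye by simp
      then show "z \<in> UNIV - measure_support \<mu>" using \<open>e' > 0\<close>
        unfolding measure_support_def by auto
    qed
  qed
  have "\<And>S. S \<in> F \<Longrightarrow> open S" unfolding F_def by auto
  then obtain F' where F': "F' \<subseteq> F" "countable F'" "\<Union>F' = \<Union>F" by (rule Lindelof)
  have "(\<Union>S\<in>F'. S) \<in> null_sets \<mu>"
  proof (rule null_sets_UN')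
    show "countable F'" by fact
    fix S assume "S \<in> F'"
    then have "S \<in> F" using F' by auto
    then show "S \<in> null_sets \<mu>" unfolding F_def by (auto simp: assms null_sets_def)
  qed
  then show ?thesis using eq F' by simp
qed

lemma sort_count:
  fixes L :: "real list"
  assumes "1 \<le> i" "i \<le> length L" "r < sort L ! (i - 1)"
  shows "length (filter (\<lambda>v. v \<le> r) L) < i"
proof -
  let ?s = "sort L"
  have "length (filter (\<lambda>v. v \<le> r) L) = length (filter (\<lambda>v. v \<le> r) ?s)"
    by (simp add: filter_sort)
  also have "\<dots> = card {k. k < length ?s \<and> ?s ! k \<le> r}"
    by (simp add: length_filter_conv_card)
  also have "\<dots> \<le> card {..<i-1}"
  proof (rule card_mono)
    show "{k. k < length ?s \<and> ?s ! k \<le> r} \<subseteq> {..<i-1}"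
    proof
      fix k assume k: "k \<in> {k. k < length ?s \<and> ?s ! k \<le> r}"
      show "k \<in> {..<i-1}"
      proof (rule ccontr)
        assume "k \<notin> {..<i-1}"
        then have "i - 1 \<le> k" by auto
        then have "?s ! (i-1) \<le> ?s ! k" using k by (intro sorted_nth_mono) auto
        then show False using k assms by auto
      qed
    qed
  qed auto
  finally show ?thesis using assms by simp
qed

lemma count_map:
  "length (filter P (map R [1..<N+1])) = card {j\<in>{1..N}. P (R j)}"
proof -
  have "length (filter P (map R [1..<N+1])) = length (filter (P \<circ> R) [1..<N+1])"
    by (simp add: filter_map)
  also have "\<dots> = card ({x. (P \<circ> R) x} \<inter> set [1..<N+1])"
    by (rule distinct_length_filter) simp
  also have "({x. (P \<circ> R) x} \<inter> set [1..<N+1]) = {j\<in>{1..N}. P (R j)}" by auto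
  finally show ?thesis .
qed

lemma card_few_le:
  fixes r :: "nat \<Rightarrow> real"
  assumes "finite I"
  shows "card {m\<in>I. card {j\<in>I - {m}. r j \<le> r m} < i} \<le> i"
proof (cases "{m\<in>I. card {j\<in>I - {m}. r j \<le> r m} < i} = {}")
  case True show ?thesis unfolding True by simp
next
  case False
  let ?T = "{m\<in>I. card {j\<in>I - {m}. r j \<le> r m} < i}"
  have fT: "finite ?T" using assms by auto
  have "Max (r ` ?T) \<in> r ` ?T" using fT False by (intro Max_in) auto
  then obtain m0 where m0T: "m0 \<in> ?T" and m0e: "r m0 = Max (r ` ?T)" by auto
  have m0max: "\<forall>m\<in>?T. r m \<le> r m0" using fT m0e by auto
  have "?T - {m0} \<subseteq> {j\<in>I - {m0}. r j \<le> r m0}" using m0max by auto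
  then have "card (?T - {m0}) \<le> card {j\<in>I - {m0}. r j \<le> r m0}"
    using assms by (intro card_mono) auto
  also have "\<dots> < i" using m0T by auto
  finally have "card (?T - {m0}) < i" .
  then show ?thesis using m0T fT by (simp add: card_Diff_singleton)
qed
lemma sum_if_card:
  assumes "finite A"
  shows "(\<Sum>m\<in>A. if Q m then 1 else 0 :: 'b::semiring_1) = of_nat (card {m\<in>A. Q m})"
proof -
  have "(\<Sum>m\<in>A. if Q m then 1 else 0 :: 'b) = (\<Sum>m\<in>{m\<in>A. Q m}. 1)"
    using sum.inter_filter[OF assms, of "\<lambda>_. 1 :: 'b" Q] by simp
  then show ?thesis by simp
qed


lemma card_meas:
  fixes f :: "'i \<Rightarrow> 'w \<Rightarrow> real"
  assumes "finite J" "\<And>j. j \<in> J \<Longrightarrow> f j \<in> borel_measurable M" "c \<in> borel_measurable M"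
  shows "(\<lambda>\<omega>. real (card {j\<in>J. f j \<omega> \<le> c \<omega>})) \<in> borel_measurable M"
proof -
  have eq: "real (card {j\<in>J. f j \<omega> \<le> c \<omega>}) = (\<Sum>j\<in>J. if f j \<omega> \<le> c \<omega> then 1 else 0)" for \<omega>
    using assms(1) by (simp add: sum.If_cases Int_def conj_commute)
  show ?thesis unfolding eq using assms by measurable
qed

lemma sym_bound:
  fixes \<mu> :: "'a::euclidean_space measure"
  assumes mu: "prob_space \<mu>" and sb: "sets \<mu> = sets borel"
  shows "of_nat (Suc N) * (\<integral>\<^sup>+\<omega>. (if card {j\<in>{1..N}. norm (\<omega> j - x) \<le> norm (\<omega> (Suc N) - x)} < i then 1 else 0)
     \<partial>(PiM {1..Suc N} (\<lambda>_. \<mu>))) \<le> (of_nat i :: ennreal)"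
proof -
  define I2 where "I2 = {1..Suc N}"
  define P where "P = PiM I2 (\<lambda>_. \<mu>)"
  define g where "g m \<omega> = (if card {j\<in>I2 - {m}. norm (\<omega> j - x) \<le> norm (\<omega> m - x)} < i then 1 else (0::ennreal))" for m \<omega>
  have fI2: "finite I2" unfolding I2_def by simp
  interpret P: prob_space P unfolding P_def using mu by (intro prob_space_PiM) auto
  have setsP: "sets P = sets (PiM I2 (\<lambda>_. borel))" unfolding P_def
    by (rule sets_PiM_cong) (auto simp: sb)
  have comp: "(\<lambda>\<omega>. \<omega> j) \<in> borel_measurable P" if "j \<in> I2" for j
    using measurable_component_singleton[OF that, of "\<lambda>_. borel"]
    by (simp add: measurable_cong_sets[OF setsP refl])
  have meas: "g m \<in> borel_measurable P" if m: "m \<in> I2" for m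
  proof -
    have "(\<lambda>\<omega>. real (card {j\<in>I2 - {m}. norm (\<omega> j - x) \<le> norm (\<omega> m - x)})) \<in> borel_measurable P"
    proof (rule card_meas[where J="I2 - {m}" and f="\<lambda>j \<omega>. norm (\<omega> j - x)" and c="\<lambda>\<omega>. norm (\<omega> m - x)"])
      show "finite (I2 - {m})" using fI2 by simp
    next
      fix j assume "j \<in> I2 - {m}"
      then have "j \<in> I2" by blast
      then show "(\<lambda>\<omega>. norm (\<omega> j - x)) \<in> borel_measurable P"
        by (rule measurable_compose[OF borel_measurable_diff[OF comp borel_measurable_const] borel_measurable_norm])
    next
      show "(\<lambda>\<omega>. norm (\<omega> m - x)) \<in> borel_measurable P"
        by (rule measurable_compose[OF borel_measurable_diff[OF comp[OF m] borel_measurable_const] borel_measurable_norm])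
    qed
    then have ev: "{\<omega>\<in>space P. real (card {j\<in>I2 - {m}. norm (\<omega> j - x) \<le> norm (\<omega> m - x)}) < real i} \<in> sets P"
      by (rule borel_measurable_less[OF _ measurable_const]) simp
    have "(\<lambda>\<omega>. if real (card {j\<in>I2 - {m}. norm (\<omega> j - x) \<le> norm (\<omega> m - x)}) < real i then 1 else (0::ennreal))
       \<in> borel_measurable P"
      by (rule measurable_If[OF measurable_const measurable_const ev]; simp)
    moreover have "g m = (\<lambda>\<omega>. if real (card {j\<in>I2 - {m}. norm (\<omega> j - x) \<le> norm (\<omega> m - x)}) < real i then 1 else (0::ennreal))"
      by (rule ext) (simp only: g_def of_nat_less_iff)
    ultimately show ?thesis by (simp only:)
  qed
  have symm: "integral\<^sup>N P (g m) = integral\<^sup>N P (g (Suc N))" if m: "m \<in> I2" for m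
  proof -
    define \<sigma> where "\<sigma> j = (if j = m then Suc N else if j = Suc N then m else j)" for j
    define T where "T \<omega> = (\<lambda>n\<in>I2. \<omega> (\<sigma> n))" for \<omega> :: "nat \<Rightarrow> 'a"
    have sI: "\<sigma> \<in> I2 \<rightarrow> I2" using m unfolding \<sigma>_def I2_def by auto
    have inj: "inj_on \<sigma> I2" unfolding \<sigma>_def inj_on_def by auto
    have d: "distr P P T = P" unfolding P_def T_def
      using distr_PiM_reindex[of I2 "\<lambda>_. \<mu>" \<sigma> I2] mu inj sI by simp
    have Tm: "T \<in> measurable P P"
    proof -
      have "(\<lambda>\<omega>. \<lambda>n\<in>I2. \<omega> (\<sigma> n)) \<in> measurable P (PiM I2 (\<lambda>_. \<mu>))"
      proof (rule measurable_restrict)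
        fix n assume n: "n \<in> I2"
        have "\<sigma> n \<in> I2" using sI n by auto
        then show "(\<lambda>\<omega>. \<omega> (\<sigma> n)) \<in> measurable P \<mu>" unfolding P_def
          by (rule measurable_component_singleton)
      qed
      then show ?thesis unfolding T_def by (simp add: P_def)
    qed
    have "integral\<^sup>N P (g (Suc N)) = integral\<^sup>N (distr P P T) (g (Suc N))" by (simp add: d)
    also have "\<dots> = (\<integral>\<^sup>+\<omega>. g (Suc N) (T \<omega>) \<partial>P)"
      by (rule nn_integral_distr[OF Tm]) (simp add: d meas I2_def)
    also have "\<dots> = (\<integral>\<^sup>+\<omega>. g m \<omega> \<partial>P)"
    proof (rule nn_integral_cong)
      fix \<omega> :: "nat \<Rightarrow> 'a"
      let ?Q = "\<lambda>j. norm (\<omega> j - x) \<le> norm (\<omega> m - x)"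
      have SN: "Suc N \<in> I2" unfolding I2_def by simp
      have ss: "\<sigma> (\<sigma> j) = j" for j unfolding \<sigma>_def by auto
      have sN: "\<sigma> j = Suc N \<longleftrightarrow> j = m" for j unfolding \<sigma>_def by auto
      have sNm: "\<sigma> (Suc N) = m" unfolding \<sigma>_def by auto
      have Tj: "T \<omega> j = \<omega> (\<sigma> j)" if "j \<in> I2" for j using that unfolding T_def by simp
      have "{j\<in>I2 - {Suc N}. norm (T \<omega> j - x) \<le> norm (T \<omega> (Suc N) - x)} = \<sigma> ` {j\<in>I2 - {m}. ?Q j}"
      proof (intro equalityI subsetI)
        fix j assume j: "j \<in> {j\<in>I2 - {Suc N}. norm (T \<omega> j - x) \<le> norm (T \<omega> (Suc N) - x)}"
        then have j1: "j \<in> I2" "j \<noteq> Suc N" and jq: "norm (T \<omega> j - x) \<le> norm (T \<omega> (Suc N) - x)" by auto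
        have sm: "\<sigma> j \<noteq> m" using j1 unfolding \<sigma>_def by auto
        have "\<sigma> j \<in> I2" using sI j1 by auto
        moreover have "?Q (\<sigma> j)" using jq by (simp add: Tj[OF j1(1)] Tj[OF SN] sNm)
        ultimately have "\<sigma> j \<in> {j\<in>I2 - {m}. ?Q j}" using sm by simp
        then show "j \<in> \<sigma> ` {j\<in>I2 - {m}. ?Q j}" using ss[of j] by (metis image_eqI)
      next
        fix j assume "j \<in> \<sigma> ` {j\<in>I2 - {m}. ?Q j}"
        then obtain k where k: "k \<in> I2" "k \<noteq> m" "?Q k" and jk: "j = \<sigma> k" by auto
        have "\<sigma> k \<in> I2" using sI k by auto
        moreover have "\<sigma> k \<noteq> Suc N" using sN k by auto
        moreover have "T \<omega> (\<sigma> k) = \<omega> k" using Tj[OF \<open>\<sigma> k \<in> I2\<close>] ss by simp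
        ultimately show "j \<in> {j\<in>I2 - {Suc N}. norm (T \<omega> j - x) \<le> norm (T \<omega> (Suc N) - x)}"
          using jk k Tj[OF SN] sNm by simp
      qed
      moreover have "card (\<sigma> ` {j\<in>I2 - {m}. ?Q j}) = card {j\<in>I2 - {m}. ?Q j}"
        using inj by (intro card_image) (auto intro: inj_on_subset)
      ultimately show "g (Suc N) (T \<omega>) = g m \<omega>" unfolding g_def using SN unfolding T_def by simp
    qed
    finally show ?thesis by simp
  qed
  have pt: "(\<Sum>m\<in>I2. g m \<omega>) \<le> of_nat i" for \<omega>
  proof -
    have "(\<Sum>m\<in>I2. g m \<omega>) = of_nat (card {m\<in>I2. card {j\<in>I2 - {m}. norm (\<omega> j - x) \<le> norm (\<omega> m - x)} < i})"
      unfolding g_def by (rule sum_if_card[OF fI2])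
    also have "\<dots> \<le> of_nat i" using card_few_le[OF fI2, of "\<lambda>j. norm (\<omega> j - x)" i] by simp
    finally show ?thesis .
  qed
  have "of_nat (Suc N) * integral\<^sup>N P (g (Suc N)) = (\<Sum>m\<in>I2. integral\<^sup>N P (g m))"
  proof -
    have "(\<Sum>m\<in>I2. integral\<^sup>N P (g m)) = (\<Sum>m\<in>I2. integral\<^sup>N P (g (Suc N)))"
      by (rule sum.cong[OF refl symm])
    then show ?thesis by (simp add: I2_def)
  qed
  also have "\<dots> = (\<integral>\<^sup>+\<omega>. (\<Sum>m\<in>I2. g m \<omega>) \<partial>P)"
    using meas by (intro nn_integral_sum[symmetric]) auto
  also have "\<dots> \<le> (\<integral>\<^sup>+\<omega>. of_nat i \<partial>P)" using pt by (intro nn_integral_mono) auto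
  also have "\<dots> = of_nat i" by (simp add: P.emeasure_space_1)
  finally have *: "of_nat (Suc N) * integral\<^sup>N P (g (Suc N)) \<le> of_nat i" .
  have "I2 - {Suc N} = {1..N}" unfolding I2_def by auto
  then have "g (Suc N) = (\<lambda>\<omega>. (if card {j\<in>{1..N}. norm (\<omega> j - x) \<le> norm (\<omega> (Suc N) - x)} < i then 1 else 0))"
    unfolding g_def by (simp add: fun_eq_iff)
  then show ?thesis using * unfolding P_def I2_def by simp
qed


lemma H_meas:
  fixes f :: "nat \<Rightarrow> 'q \<Rightarrow> 'a::euclidean_space"
  assumes "finite J" "\<And>j. j \<in> J \<Longrightarrow> f j \<in> borel_measurable Q" "c \<in> borel_measurable Q"
  shows "(\<lambda>\<omega>. if card {j\<in>J. norm (f j \<omega> - x) \<le> norm (c \<omega> - x)} < i then 1 else (0::ennreal)) \<in> borel_measurable Q"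
proof -
  have "(\<lambda>\<omega>. real (card {j\<in>J. norm (f j \<omega> - x) \<le> norm (c \<omega> - x)})) \<in> borel_measurable Q"
  proof (rule card_meas[where J="J" and f="\<lambda>j \<omega>. norm (f j \<omega> - x)" and c="\<lambda>\<omega>. norm (c \<omega> - x)"])
    show "finite J" by fact
  next
    fix j assume "j \<in> J"
    then show "(\<lambda>\<omega>. norm (f j \<omega> - x)) \<in> borel_measurable Q"
      by (rule measurable_compose[OF borel_measurable_diff[OF assms(2) borel_measurable_const] borel_measurable_norm])
  next
    show "(\<lambda>\<omega>. norm (c \<omega> - x)) \<in> borel_measurable Q"
      by (rule measurable_compose[OF borel_measurable_diff[OF assms(3) borel_measurable_const] borel_measurable_norm])
  qed
  then have ev: "{\<omega>\<in>space Q. real (card {j\<in>J. norm (f j \<omega> - x) \<le> norm (c \<omega> - x)}) < real i} \<in> sets Q"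
    by (rule borel_measurable_less[OF _ measurable_const]) simp
  have "(\<lambda>\<omega>. if real (card {j\<in>J. norm (f j \<omega> - x) \<le> norm (c \<omega> - x)}) < real i then 1 else (0::ennreal))
     \<in> borel_measurable Q"
    by (rule measurable_If[OF measurable_const measurable_const ev]; simp)
  then show ?thesis by (simp only: of_nat_less_iff)
qed

lemma link:
  fixes \<mu> :: "'a::euclidean_space measure" and M :: "'w measure" and X :: "nat \<Rightarrow> 'w \<Rightarrow> 'a" and x :: 'a and i :: nat
  assumes mu: "prob_space \<mu>" and sb: "sets \<mu> = sets borel" and PM: "prob_space M"
    and Xm: "\<forall>j\<in>{1..N}. X j \<in> borel_measurable M"
    and ind: "prob_space.indep_vars M (\<lambda>_. borel) X {1..N}"
    and dX: "\<forall>j\<in>{1..N}. distr M borel (X j) = \<mu>" and N1: "N \<ge> 1"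
  defines "H \<equiv> \<lambda>(z::nat \<Rightarrow> 'a) y. (if card {j\<in>{1..N}. norm (z j - x) \<le> norm (y - x)} < i then 1 else (0::ennreal))"
  shows "(\<lambda>w. \<integral>\<^sup>+y. H (\<lambda>j. X j w) y \<partial>\<mu>) \<in> borel_measurable M"
    and "of_nat (Suc N) * (\<integral>\<^sup>+w. (\<integral>\<^sup>+y. H (\<lambda>j. X j w) y \<partial>\<mu>) \<partial>M) \<le> of_nat i"
proof -
  interpret M: prob_space M by fact
  interpret mu: prob_space \<mu> by fact
  define I1 where "I1 = {1..N}"
  define Q where "Q = PiM I1 (\<lambda>_. \<mu>)"
  define Xv where "Xv w = (\<lambda>j\<in>I1. X j w)" for w
  define Hq where "Hq z = (\<integral>\<^sup>+y. H z y \<partial>\<mu>)" for z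
  have fI1: "finite I1" unfolding I1_def by simp
  have setsQ: "sets Q = sets (PiM I1 (\<lambda>_. borel))" unfolding Q_def
    by (rule sets_PiM_cong) (auto simp: sb)
  have Xj: "X j \<in> measurable M \<mu>" if "j \<in> I1" for j
    using Xm that unfolding I1_def by (simp add: measurable_cong_sets[OF refl sb])
  have Xvm: "Xv \<in> measurable M Q" unfolding Xv_def Q_def
    by (rule measurable_restrict) (rule Xj)
  have dQ: "distr M Q Xv = Q"
  proof -
    have ne: "I1 \<noteq> {}" using N1 unfolding I1_def by auto
    have rv: "X j \<in> measurable M borel" if "j \<in> I1" for j using Xm that unfolding I1_def by blast
    have ind': "M.indep_vars (\<lambda>_. borel) X I1" using ind unfolding I1_def .
    have "distr M (PiM I1 (\<lambda>_. borel)) (\<lambda>x. \<lambda>j\<in>I1. X j x) = PiM I1 (\<lambda>j. distr M borel (X j))"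
      using M.indep_vars_iff_distr_eq_PiM'[where I=I1 and X=X and M'="\<lambda>_. borel", OF ne rv] ind' by blast
    then have "distr M (PiM I1 (\<lambda>_. borel)) Xv = PiM I1 (\<lambda>j. distr M borel (X j))"
      unfolding Xv_def .
    also have "\<dots> = Q" unfolding Q_def
      by (rule PiM_cong[OF refl]) (use dX in \<open>simp add: I1_def\<close>)
    finally have "distr M (PiM I1 (\<lambda>_. borel)) Xv = Q" .
    moreover have "distr M Q Xv = distr M (PiM I1 (\<lambda>_. borel)) Xv"
      by (rule distr_cong[OF refl setsQ refl])
    ultimately show ?thesis by simp
  qed
  have HXv: "H (\<lambda>j. X j w) = H (Xv w)" for w
  proof -
    have "{j\<in>{1..N}. norm (X j w - x) \<le> norm (y - x)} = {j\<in>{1..N}. norm (Xv w j - x) \<le> norm (y - x)}" for y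
      by (auto simp: Xv_def I1_def)
    then show ?thesis unfolding H_def by simp
  qed
  have Hqm: "Hq \<in> borel_measurable Q"
    unfolding Hq_def
  proof (rule mu.borel_measurable_nn_integral)
    have setsQm: "sets (Q \<Otimes>\<^sub>M \<mu>) = sets (PiM I1 (\<lambda>_. borel) \<Otimes>\<^sub>M borel)"
      by (rule sets_pair_measure_cong[OF setsQ sb])
    have "(\<lambda>p. if card {j\<in>I1. norm (fst p j - x) \<le> norm (snd p - x)} < i then 1 else (0::ennreal))
       \<in> borel_measurable (Q \<Otimes>\<^sub>M \<mu>)"
    proof (rule H_meas[where f="\<lambda>j p. fst p j" and c="snd" and J=I1])
      show "finite I1" by fact
    next
      fix j assume j: "j \<in> I1"
      have "(\<lambda>p. fst p j) \<in> borel_measurable (PiM I1 (\<lambda>_. borel) \<Otimes>\<^sub>M borel)"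
        by (rule measurable_compose[OF measurable_fst measurable_component_singleton[OF j]])
      then show "(\<lambda>p. fst p j) \<in> borel_measurable (Q \<Otimes>\<^sub>M \<mu>)"
        by (simp add: measurable_cong_sets[OF setsQm refl])
    next
      have "snd \<in> borel_measurable (PiM I1 (\<lambda>_. borel) \<Otimes>\<^sub>M (borel::'a measure))"
        by (rule measurable_snd)
      then show "snd \<in> borel_measurable (Q \<Otimes>\<^sub>M \<mu>)"
        by (simp add: measurable_cong_sets[OF setsQm refl])
    qed
    moreover have "(\<lambda>p. if card {j\<in>I1. norm (fst p j - x) \<le> norm (snd p - x)} < i then 1 else (0::ennreal))
       = case_prod H" unfolding H_def I1_def by (rule ext) (simp add: split_beta)
    ultimately show "case_prod H \<in> borel_measurable (Q \<Otimes>\<^sub>M \<mu>)" by simp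
  qed
  have eqF: "(\<lambda>w. \<integral>\<^sup>+y. H (\<lambda>j. X j w) y \<partial>\<mu>) = (\<lambda>w. Hq (Xv w))"
    unfolding Hq_def HXv ..
  show "(\<lambda>w. \<integral>\<^sup>+y. H (\<lambda>j. X j w) y \<partial>\<mu>) \<in> borel_measurable M"
    unfolding eqF by (rule measurable_compose[OF Xvm Hqm])
  have "(\<integral>\<^sup>+w. (\<integral>\<^sup>+y. H (\<lambda>j. X j w) y \<partial>\<mu>) \<partial>M) = (\<integral>\<^sup>+w. Hq (Xv w) \<partial>M)"
    unfolding eqF ..
  also have "\<dots> = integral\<^sup>N (distr M Q Xv) Hq"
    by (rule nn_integral_distr[OF Xvm, symmetric]) (simp add: dQ Hqm)
  also have "\<dots> = integral\<^sup>N Q Hq" by (simp add: dQ)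
  also have "\<dots> = (\<integral>\<^sup>+\<omega>. H \<omega> (\<omega> (Suc N)) \<partial>(PiM (insert (Suc N) I1) (\<lambda>_. \<mu>)))"
  proof -
    interpret PS: product_sigma_finite "\<lambda>_::nat. \<mu>"
      unfolding product_sigma_finite_def using mu prob_space_imp_sigma_finite by blast
    have nI: "Suc N \<notin> I1" unfolding I1_def by simp
    have setsP2: "sets (PiM (insert (Suc N) I1) (\<lambda>_. \<mu>)) = sets (PiM (insert (Suc N) I1) (\<lambda>_. borel))"
      by (rule sets_PiM_cong) (auto simp: sb)
    have comp2: "(\<lambda>\<omega>. \<omega> j) \<in> borel_measurable (PiM (insert (Suc N) I1) (\<lambda>_. \<mu>))" if "j \<in> insert (Suc N) I1" for j
      using measurable_component_singleton[OF that, of "\<lambda>_. borel"]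
      by (simp add: measurable_cong_sets[OF setsP2 refl])
    have fm: "(\<lambda>\<omega>. H \<omega> (\<omega> (Suc N))) \<in> borel_measurable (PiM (insert (Suc N) I1) (\<lambda>_. \<mu>))"
    proof -
      have "(\<lambda>\<omega>. if card {j\<in>I1. norm (\<omega> j - x) \<le> norm (\<omega> (Suc N) - x)} < i then 1 else (0::ennreal))
         \<in> borel_measurable (PiM (insert (Suc N) I1) (\<lambda>_. \<mu>))"
      proof (rule H_meas[where f="\<lambda>j \<omega>. \<omega> j" and c="\<lambda>\<omega>. \<omega> (Suc N)" and J=I1])
        show "finite I1" by fact
      next
        fix j assume "j \<in> I1"
        then show "(\<lambda>\<omega>. \<omega> j) \<in> borel_measurable (PiM (insert (Suc N) I1) (\<lambda>_. \<mu>))"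
          by (intro comp2) blast
      next
        show "(\<lambda>\<omega>. \<omega> (Suc N)) \<in> borel_measurable (PiM (insert (Suc N) I1) (\<lambda>_. \<mu>))"
          by (intro comp2) blast
      qed
      then show ?thesis unfolding H_def I1_def .
    qed
    have "integral\<^sup>N (PiM (insert (Suc N) I1) (\<lambda>_. \<mu>)) (\<lambda>\<omega>. H \<omega> (\<omega> (Suc N)))
       = (\<integral>\<^sup>+z. (\<integral>\<^sup>+y. H (z(Suc N := y)) ((z(Suc N := y)) (Suc N)) \<partial>\<mu>) \<partial>Q)"
      unfolding Q_def by (rule PS.product_nn_integral_insert[OF fI1 nI fm])
    also have "\<dots> = integral\<^sup>N Q Hq"
    proof -
      have e: "H (z(Suc N := y)) y = H z y" for z y
      proof -
        have "{j\<in>{1..N}. norm ((z(Suc N := y)) j - x) \<le> norm (y - x)} = {j\<in>{1..N}. norm (z j - x) \<le> norm (y - x)}"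
          by auto
        then show ?thesis unfolding H_def by simp
      qed
      show ?thesis unfolding Hq_def fun_upd_same e ..
    qed
    finally show ?thesis by (rule sym)
  qed
  finally have eqI: "(\<integral>\<^sup>+w. (\<integral>\<^sup>+y. H (\<lambda>j. X j w) y \<partial>\<mu>) \<partial>M)
      = (\<integral>\<^sup>+\<omega>. H \<omega> (\<omega> (Suc N)) \<partial>(PiM (insert (Suc N) I1) (\<lambda>_. \<mu>)))" .
  have "insert (Suc N) I1 = {1..Suc N}" unfolding I1_def by auto
  then show "of_nat (Suc N) * (\<integral>\<^sup>+w. (\<integral>\<^sup>+y. H (\<lambda>j. X j w) y \<partial>\<mu>) \<partial>M) \<le> of_nat i"
    unfolding eqI using sym_bound[OF mu sb, of N x i] unfolding H_def by simp
qed


lemma tangent: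
  fixes t \<beta> :: real and d :: nat
  assumes "\<beta> > 0" "d \<ge> 1" "t \<ge> 0"
  shows "t \<le> \<beta> * (1 - 1 / real d) + \<beta> * (t / \<beta>) ^ d / real d"
proof -
  have "-1 \<le> t / \<beta> - 1" using assms by simp
  then have "1 + real d * (t / \<beta> - 1) \<le> (1 + (t / \<beta> - 1)) ^ d" by (rule Bernoulli_inequality)
  then have B: "1 + real d * (t / \<beta> - 1) \<le> (t / \<beta>) ^ d" by simp
  have dp: "real d > 0" using assms by simp
  define u where "u = t / \<beta>"
  have B': "1 + real d * (u - 1) \<le> u ^ d" using B unfolding u_def .
  have "(1 + real d * (u - 1)) / real d \<le> u ^ d / real d"
    using B' dp by (rule divide_right_mono[OF _ less_imp_le])
  moreover have "(1 + real d * (u - 1)) / real d = 1 / real d + u - 1"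
    using dp by (simp add: field_simps)
  ultimately have "t / \<beta> \<le> (1 - 1 / real d) + (t / \<beta>) ^ d / real d" unfolding u_def by linarith
  then have "\<beta> * (t / \<beta>) \<le> \<beta> * ((1 - 1 / real d) + (t / \<beta>) ^ d / real d)"
    using assms by (intro mult_left_mono) auto
  then show ?thesis using assms by (simp add: field_simps)
qed

theorem lemma3p1:
  fixes \<mu> :: "'a::euclidean_space measure"
    and M :: "'w measure"
    and X :: "nat \<Rightarrow> 'w \<Rightarrow> 'a"
    and N :: nat and \<rho> :: real
  assumes "prob_space \<mu>" and "sets \<mu> = sets borel"
    and "bounded (measure_support \<mu>)"
    and "diameter (measure_support \<mu>) > 0"
    and "\<rho> > 0"
    and "\<forall>x\<in>measure_support \<mu>. \<forall>e. 0 < e \<and> e \<le> diameter (measure_support \<mu>) \<longrightarrow>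
           measure \<mu> (cball x e) \<ge> \<rho> * e ^ DIM('a)"
    and "prob_space M"
    and "\<forall>j\<in>{1..N}. X j \<in> borel_measurable M"
    and "prob_space.indep_vars M (\<lambda>_. borel) X {1..N}"
    and "\<forall>j\<in>{1..N}. distr M borel (X j) = \<mu>"
  shows "\<forall>x\<in>measure_support \<mu>. \<forall>i\<in>{1..N}.
           (\<integral>\<^sup>+ w. ennreal (knn_dist X N x i w) \<partial>M)
             \<le> ennreal (2 * (real i / (\<rho> * real (N + 1))) powr (1 / real DIM('a)))"
proof (intro ballI)
  fix x i assume xS: "x \<in> measure_support \<mu>" and iN: "i \<in> {1..N}"
  note mu = assms(1) and sb = assms(2) and bS = assms(3) and Dp = assms(4) and rp = assms(5)
    and growth = assms(6) and PM = assms(7) and Xm = assms(8) and ind = assms(9) and dX = assms(10)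
  interpret M: prob_space M by fact
  interpret mu: prob_space \<mu> by fact
  define S where "S = measure_support \<mu>"
  define Dm where "Dm = diameter S"
  define d where "d = DIM('a)"
  have d1: "d \<ge> 1" unfolding d_def using DIM_positive by (simp add: Suc_le_eq)
  have N1: "N \<ge> 1" and i1: "i \<ge> 1" and iN': "i \<le> N" using iN by auto
  define H where "H = (\<lambda>(z::nat \<Rightarrow> 'a) y. (if card {j\<in>{1..N}. norm (z j - x) \<le> norm (y - x)} < i then 1 else (0::ennreal)))"
  define F where "F w = (\<integral>\<^sup>+y. H (\<lambda>j. X j w) y \<partial>\<mu>)" for w
  have Fm: "F \<in> borel_measurable M" unfolding F_def H_def
    by (rule link(1)[OF mu sb PM Xm ind dX N1])
  have Fb: "of_nat (Suc N) * (\<integral>\<^sup>+w. F w \<partial>M) \<le> of_nat i" unfolding F_def H_def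
    by (rule link(2)[OF mu sb PM Xm ind dX N1])
  define a where "a = real i / (\<rho> * real (N + 1))"
  define b where "b = 2 ^ d * a"
  define \<beta> where "\<beta> = b powr (1 / real d)"
  have ap: "a > 0" unfolding a_def using i1 rp by simp
  have bp: "b > 0" unfolding b_def using ap by simp
  have betap: "\<beta> > 0" unfolding \<beta>_def using bp by simp
  have betad: "\<beta> ^ d = b"
    unfolding \<beta>_def using bp d1 by (simp add: powr_realpow[symmetric] powr_powr)
  have beta2: "\<beta> = 2 * a powr (1 / real d)"
  proof -
    have "\<beta> = (2 ^ d) powr (1 / real d) * a powr (1 / real d)"
      unfolding \<beta>_def b_def using ap by (simp add: powr_mult)
    also have "(2::real) ^ d = 2 powr real d" by (simp add: powr_realpow)
    also have "(2 powr real d) powr (1 / real d) = (2::real)" using d1 by (simp add: powr_powr)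
    finally show ?thesis .
  qed
  define c1 where "c1 = \<beta> * (1 - 1 / real d)"
  define c2 where "c2 = \<beta> / (real d * real i)"
  have c1p: "c1 \<ge> 0" unfolding c1_def using betap d1 by simp
  have c2p: "c2 \<ge> 0" unfolding c2_def using betap by simp
  have key: "c1 + c2 * real i = \<beta>" unfolding c1_def c2_def using d1 i1 by (simp add: field_simps)
  have AEin: "AE w in M. \<forall>j\<in>{1..N}. X j w \<in> S"
  proof (rule AE_ball_countable')
    fix j assume j: "j \<in> {1..N}"
    have Xjm: "X j \<in> borel_measurable M" using Xm j by blast
    have nullS: "UNIV - S \<in> null_sets \<mu>" unfolding S_def by (rule support_full[OF sb])
    then have "UNIV - S \<in> sets borel" using sb by (auto simp: null_sets_def)
    then have "emeasure M (X j -` (UNIV - S) \<inter> space M) = emeasure (distr M borel (X j)) (UNIV - S)"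
      by (rule emeasure_distr[OF Xjm, symmetric])
    also have "\<dots> = 0" using dX j nullS by auto
    finally have "X j -` (UNIV - S) \<inter> space M \<in> null_sets M"
      using measurable_sets[OF Xjm \<open>UNIV - S \<in> sets borel\<close>] by (auto simp: null_sets_def)
    then show "AE w in M. X j w \<in> S"
      by (rule AE_I') auto
  qed simp
  have pw: "ennreal (knn_dist X N x i w) \<le> ennreal c1 + ennreal c2 * (of_nat (Suc N) * F w)"
    if wS: "\<forall>j\<in>{1..N}. X j w \<in> S" for w
  proof -
    define L where "L = map (\<lambda>j. norm (X j w - x)) [1..<N+1]"
    define t where "t = sort L ! (i - 1)"
    have tk: "knn_dist X N x i w = t" unfolding knn_dist_def t_def L_def ..
    have lenL: "length L = N" unfolding L_def by simp
    have "i - 1 < length (sort L)" using lenL i1 iN' by simp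
    then have "sort L ! (i - 1) \<in> set (sort L)" by (rule nth_mem)
    then have "t \<in> set L" unfolding t_def by simp
    moreover have "set L = (\<lambda>j. norm (X j w - x)) ` {1..N}"
    proof -
      have ss: "set [1..<N+1] = {1..N}" by auto
      show ?thesis unfolding L_def set_map ss ..
    qed
    ultimately obtain j where j: "j \<in> {1..N}" and tj: "t = norm (X j w - x)" by auto
    have t0: "t \<ge> 0" using tj by simp
    have tD: "t \<le> Dm" unfolding tj Dm_def
      using diameter_bounded_bound[OF bS[folded S_def] wS[rule_format, OF j] xS[folded S_def]]
      by (simp add: dist_norm)
    have tan: "t \<le> c1 + \<beta> * (t / \<beta>) ^ d / real d"
      unfolding c1_def using tangent[OF betap d1 t0] .
    have td: "(t / \<beta>) ^ d = t ^ d / b" using betad by (simp add: power_divide)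
    have mb: "t ^ d \<le> 2 ^ d / \<rho> * measure \<mu> (ball x t)"
    proof (cases "t = 0")
      case True then show ?thesis using d1 rp by (simp add: power_0_left)
    next
      case False
      then have tp: "t / 2 > 0" using t0 by simp
      have "t / 2 \<le> Dm" using tD t0 by simp
      have gx: "\<forall>e. 0 < e \<and> e \<le> Dm \<longrightarrow> \<rho> * e ^ d \<le> measure \<mu> (cball x e)"
        using growth xS unfolding d_def Dm_def S_def by (rule bspec)
      have "\<rho> * (t / 2) ^ d \<le> measure \<mu> (cball x (t / 2))"
        using gx tp \<open>t / 2 \<le> Dm\<close> by blast
      also have "\<dots> \<le> measure \<mu> (ball x t)"
      proof (rule mu.finite_measure_mono)
        show "cball x (t / 2) \<subseteq> ball x t" using tp by (auto simp: subset_iff)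
        show "ball x t \<in> sets \<mu>" by (simp add: sb)
      qed
      finally have "\<rho> * (t ^ d / 2 ^ d) \<le> measure \<mu> (ball x t)" by (simp add: power_divide)
      then show ?thesis using rp by (simp add: field_simps)
    qed
    have "\<beta> * (t / \<beta>) ^ d / real d \<le> \<beta> * (2 ^ d / \<rho> * measure \<mu> (ball x t) / b) / real d"
      unfolding td using mb betap bp d1 by (intro divide_right_mono mult_left_mono) auto
    also have "\<dots> = c2 * real (Suc N) * measure \<mu> (ball x t)"
      unfolding c2_def b_def a_def using rp i1 d1 by (simp add: field_simps)
    finally have tb: "t \<le> c1 + c2 * real (Suc N) * measure \<mu> (ball x t)" using tan by simp
    have ballF: "emeasure \<mu> (ball x t) \<le> F w"
    proof -
      have "emeasure \<mu> (ball x t) = (\<integral>\<^sup>+y. indicator (ball x t) y \<partial>\<mu>)"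
        by (rule nn_integral_indicator[symmetric]) (simp add: sb)
      also have "\<dots> \<le> (\<integral>\<^sup>+y. H (\<lambda>j. X j w) y \<partial>\<mu>)"
      proof (rule nn_integral_mono)
        fix y
        show "indicator (ball x t) y \<le> H (\<lambda>j. X j w) y"
        proof (cases "y \<in> ball x t")
          case True
          then have "norm (y - x) < sort L ! (i - 1)" unfolding t_def[symmetric]
            by (simp add: dist_norm norm_minus_commute)
          then have "length (filter (\<lambda>v. v \<le> norm (y - x)) L) < i"
            using sort_count[of i L] i1 iN' lenL by simp
          then have "card {j\<in>{1..N}. norm (X j w - x) \<le> norm (y - x)} < i"
            unfolding L_def count_map[of "\<lambda>v. v \<le> norm (y - x)" "\<lambda>j. norm (X j w - x)" N] .
          then show ?thesis using True unfolding H_def by simp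
        qed simp
      qed
      finally show ?thesis unfolding F_def .
    qed
    have "ennreal t \<le> ennreal (c1 + c2 * real (Suc N) * measure \<mu> (ball x t))"
      using tb by (rule ennreal_leI)
    also have "\<dots> = ennreal c1 + ennreal (c2 * (real (Suc N) * measure \<mu> (ball x t)))"
      using c1p c2p by (simp add: ennreal_plus mult.assoc)
    also have "ennreal (c2 * (real (Suc N) * measure \<mu> (ball x t)))
        = ennreal c2 * (ennreal (real (Suc N)) * ennreal (measure \<mu> (ball x t)))"
      using c2p by (simp add: ennreal_mult)
    also have "\<dots> = ennreal c2 * (of_nat (Suc N) * emeasure \<mu> (ball x t))"
      by (simp only: ennreal_of_nat_eq_real_of_nat mu.emeasure_eq_measure)
    also have "ennreal c1 + ennreal c2 * (of_nat (Suc N) * emeasure \<mu> (ball x t))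
        \<le> ennreal c1 + ennreal c2 * (of_nat (Suc N) * F w)"
      using ballF by (intro add_left_mono mult_left_mono) auto
    finally show ?thesis unfolding tk .
  qed
  have "(\<integral>\<^sup>+ w. ennreal (knn_dist X N x i w) \<partial>M) \<le> (\<integral>\<^sup>+ w. (ennreal c1 + ennreal c2 * (of_nat (Suc N) * F w)) \<partial>M)"
    by (rule nn_integral_mono_AE[OF eventually_mono[OF AEin pw]])
  also have "\<dots> = (\<integral>\<^sup>+ w. ennreal c1 \<partial>M) + (\<integral>\<^sup>+ w. (ennreal c2 * of_nat (Suc N)) * F w \<partial>M)"
  proof (subst nn_integral_add)
    show "(\<lambda>w. ennreal c2 * (of_nat (Suc N) * F w)) \<in> borel_measurable M"
      by (intro borel_measurable_times_ennreal measurable_const Fm) simp_all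
  qed (auto simp: mult.assoc)
  also have "\<dots> = ennreal c1 + ennreal c2 * (of_nat (Suc N) * (\<integral>\<^sup>+w. F w \<partial>M))"
  proof -
    have m2: "(\<lambda>w. of_nat (Suc N) * F w) \<in> borel_measurable M"
      by (intro borel_measurable_times_ennreal measurable_const Fm) simp
    show ?thesis
      by (simp only: nn_integral_cmult[OF m2] nn_integral_cmult[OF Fm] nn_integral_const M.emeasure_space_1 mult_1_right mult.assoc)
  qed
  also have "\<dots> \<le> ennreal c1 + ennreal c2 * of_nat i"
    using Fb by (intro add_left_mono mult_left_mono) auto
  also have "\<dots> = ennreal \<beta>"
    using key c1p c2p by (simp add: ennreal_plus[symmetric] ennreal_mult[symmetric] ennreal_of_nat_eq_real_of_nat)
  also have "\<beta> = 2 * (real i / (\<rho> * real (N + 1))) powr (1 / real DIM('a))"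
    unfolding beta2 a_def d_def ..
  finally show "(\<integral>\<^sup>+ w. ennreal (knn_dist X N x i w) \<partial>M)
             \<le> ennreal (2 * (real i / (\<rho> * real (N + 1))) powr (1 / real DIM('a)))" .
qed
end
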